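(* Let $\alpha>0$ and $p\in\big(0,\max\{\alpha/2,\alpha-1\}\big]$. Then $$\widehat M_{p,\alpha}:=\sup\Big\{\frac{\alpha^2}{4p^2}\,\frac{z^2}{\Phi_{p,\alpha}(z)}:\ z\in\mathbb R\setminus\{0\}\Big\}<\infty,$$ and the Legendre transform satisfies $\Phi^*_{p,\alpha}(\xi)\le\widehat M_{p,\alpha}\big(\tfrac p\alpha\xi\big)^2$ for all $\xi\in\mathbb R$. Moreover, $\widehat M_{p,\alpha}\ge1/4$; for $p=1/2$ and $\alpha\ge1$ one has $\widehat M_{1/2,\alpha}\le\alpha/2$ and $\widehat M_{1/2,1}=1/2$; and for $p>0$ and $\alpha=p+1$ one has $\widehat M_{p,p+1}=1/4$.
   Context: For $\alpha>0$, $p>0$: $\Phi_{p,\alpha}(z)=\frac{\alpha}{p-1}\big((z+1)^{(p-1)/p}-1\big)\big((z+1)^{\alpha/p}-1\big)$ for $z>-1$ if $p\ne1$, $\Phi_{1,\alpha}(z)=\alpha\log(z+1)\big((z+1)^\alpha-1\big)$ for $z>-1$ (the limit $p\to1$), and $\Phi_{p,\alpha}(z)=+\infty$ for $z\le-1$. $\Phi^*_{p,\alpha}(\xi)=\sup_z\{\xi z-\Phi_{p,\alpha}(z)\}$. *)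

theory Defs
  imports "HOL-Analysis.Analysis"
begin

definition Phi :: "real \<Rightarrow> real \<Rightarrow> real \<Rightarrow> ereal" where
  "Phi p \<alpha> z =
     (if z \<le> -1 then \<infinity>
      else if p = 1 then ereal (\<alpha> * ln (z + 1) * ((z + 1) powr \<alpha> - 1))
      else ereal (\<alpha> / (p - 1) * ((z + 1) powr ((p - 1) / p) - 1) * ((z + 1) powr (\<alpha> / p) - 1)))"

definition PhiStar :: "real \<Rightarrow> real \<Rightarrow> real \<Rightarrow> ereal" where
  "PhiStar p \<alpha> \<xi> = (SUP z. ereal (\<xi> * z) - Phi p \<alpha> z)"

text \<open>The constant hat M_{p,alpha} (in the extended reals; x / infinity = 0).\<close>
definition Mhat :: "real \<Rightarrow> real \<Rightarrow> ereal" where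
  "Mhat p \<alpha> = (SUP z \<in> UNIV - {0}. ereal (\<alpha>\<^sup>2 / (4 * p\<^sup>2) * z\<^sup>2) / Phi p \<alpha> z)"

end

theory Submission
  imports Defs "HOL-Real_Asymp.Real_Asymp"
begin


definition E :: "real \<Rightarrow> real" where
  "E x = (if x = 0 then 1 else (exp x - 1) / x)"

lemma E_pos: "E x > 0"
proof (cases "x = 0")
  case False
  show ?thesis
  proof (cases "x > 0")
    case True thus ?thesis using False by (simp add: E_def)
  next
    case f: False
    hence "x < 0" using False by simp
    moreover have "exp x < 1" using \<open>x<0\<close> by simp
    ultimately show ?thesis using False by (simp add: E_def divide_neg_neg)
  qed
qed (simp add: E_def)

lemma E_mul: "x * E x = exp x - 1"
  by (simp add: E_def)

lemma E_ge1: "x \<ge> 0 \<Longrightarrow> E x \<ge> 1"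
  using exp_ge_add_one_self[of x] by (auto simp: E_def field_simps)

lemma E_le1: "x \<le> 0 \<Longrightarrow> E x \<le> 1"
  using exp_ge_add_one_self[of x] by (auto simp: E_def field_simps)

lemma E_mono_aux:
  fixes x y :: real
  assumes "x < y" "x \<noteq> 0" "y \<noteq> 0"
  shows "(exp x - 1) / x \<le> (exp y - 1) / y"
proof -
  have c: "convex_on UNIV exp" by (rule exp_convex)
  have "0 < x \<or> y < 0 \<or> (x < 0 \<and> 0 < y)" using assms less_linear[of x 0] less_linear[of y 0] by auto
  thus ?thesis
  proof (elim disjE conjE)
    assume 1: "0 < x"
    have "(exp 0 - exp x) / (0 - x) \<le> (exp 0 - exp y) / (0 - y)"
      using convex_on_slope_le(1)[OF c, of 0 y x] 1 assms(1) by simp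
    thus ?thesis by (simp add: diff_divide_distrib)
  next
    assume 2: "y < 0"
    from convex_on_slope_le(2)[OF c, of x 0 y] 2 assms(1) show ?thesis by simp
  next
    assume 3: "x < 0" "0 < y"
    from convex_on_slope_le(1)[OF c, of x y 0] convex_on_slope_le(2)[OF c, of x y 0] 3
    show ?thesis by (simp add: diff_divide_distrib)
  qed
qed

lemma E_mono: "x \<le> y \<Longrightarrow> E x \<le> E y"
proof -
  assume "x \<le> y"
  show ?thesis
  proof (cases "x = y")
    case False
    hence xy: "x < y" using \<open>x \<le> y\<close> by simp
    show ?thesis
    proof (cases "x = 0")
      case True thus ?thesis using E_ge1[of y] xy by (simp add: E_def)
    next
      case x0: False
      show ?thesis
      proof (cases "y = 0")
        case True thus ?thesis using E_le1[of x] xy by (simp add: E_def[of 0])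
      next
        case False thus ?thesis using E_mono_aux[OF xy x0 False] x0 by (simp add: E_def)
      qed
    qed
  qed simp
qed

lemma E_tendsto0: "(E \<longlongrightarrow> 1) (at 0)"
proof -
  have "((\<lambda>h::real. (exp (0 + h) - exp 0) / h) \<longlongrightarrow> exp 0) (at 0)"
    using DERIV_exp[of 0] by (simp add: DERIV_def)
  hence 1: "((\<lambda>h::real. (exp h - 1) / h) \<longlongrightarrow> 1) (at 0)" by simp
  have 2: "eventually (\<lambda>h. (exp h - 1) / h = E h) (at (0::real))"
    using eventually_neq_at_within[of 0 0 UNIV] by eventually_elim (simp add: E_def)
  show ?thesis using tendsto_cong[OF 2] 1 by simp
qed

lemma E_isCont: "isCont E x"
proof (cases "x = 0")
  case True thus ?thesis using E_tendsto0 by (simp add: isCont_def E_def)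
next
  case False
  have 1: "((\<lambda>h::real. (exp h - 1) / h) \<longlongrightarrow> (exp x - 1) / x) (at x)"
    using False by (intro tendsto_intros) auto
  have 2: "eventually (\<lambda>h. (exp h - 1) / h = E h) (at x)"
  proof -
    have "eventually (\<lambda>h. h \<in> - {0}) (at x)"
      using False by (intro eventually_at_in_open') auto
    thus ?thesis by eventually_elim (simp add: E_def)
  qed
  have "(E \<longlongrightarrow> (exp x - 1) / x) (at x)" using tendsto_cong[OF 2] 1 by simp
  thus ?thesis using False unfolding isCont_def by (simp add: E_def[of x])
qed

lemma E_isCont' [continuous_intros]: "isCont f x \<Longrightarrow> isCont (\<lambda>x. E (f x)) x"
  by (rule isCont_o2[OF _ E_isCont])

lemma E_neg: "E (- x) = exp (- x) * E x"
  by (cases "x = 0") (auto simp: E_def field_simps exp_minus)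

lemma sinh_convex: "convex_on {0..} (sinh :: real \<Rightarrow> real)"
  by (rule f''_ge0_imp_convex[where f' = cosh and f'' = sinh])
     (auto intro!: derivative_eq_intros)

lemma sinh_slope_mono:
  assumes "0 < v" "v < u"
  shows "sinh v / v \<le> sinh u / (u::real)"
proof -
  have "(sinh 0 - sinh v) / (0 - v) \<le> (sinh 0 - sinh u) / (0 - u)"
    using convex_on_slope_le(1)[OF sinh_convex, of 0 u v] assms by simp
  moreover have "(sinh 0 - sinh v) / (0 - v) = sinh v / v" "(sinh 0 - sinh u) / (0 - u) = sinh u / u"
    by simp_all
  ultimately show ?thesis by simp
qed

lemma sinh_sq_mono:
  assumes "\<bar>v\<bar> < \<bar>u\<bar>"
  shows "(sinh v)\<^sup>2 * u\<^sup>2 \<le> (sinh u)\<^sup>2 * (v::real)\<^sup>2"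
proof (cases "v = 0")
  case False
  hence "sinh \<bar>v\<bar> / \<bar>v\<bar> \<le> sinh \<bar>u\<bar> / \<bar>u\<bar>" using sinh_slope_mono[of "\<bar>v\<bar>" "\<bar>u\<bar>"] assms by simp
  moreover have "0 \<le> sinh \<bar>v\<bar> / \<bar>v\<bar>" by simp
  ultimately have "(sinh \<bar>v\<bar> / \<bar>v\<bar>)\<^sup>2 \<le> (sinh \<bar>u\<bar> / \<bar>u\<bar>)\<^sup>2" by (rule power_mono)
  hence "(sinh v)\<^sup>2 / v\<^sup>2 \<le> (sinh u)\<^sup>2 / u\<^sup>2" by (simp add: power_divide)
  moreover have "v\<^sup>2 > 0" "u\<^sup>2 > 0" using False assms by auto
  ultimately show ?thesis by (simp add: field_simps)
qed simp

lemma sinh_prod: "sinh (u + v) * sinh (u - v) = (sinh u)\<^sup>2 - (sinh v)\<^sup>2" for u v :: real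
proof -
  have "sinh (u + v) * sinh (u - v) = (sinh u)\<^sup>2 * (cosh v)\<^sup>2 - (cosh u)\<^sup>2 * (sinh v)\<^sup>2"
    by (simp add: sinh_add sinh_diff power2_eq_square algebra_simps)
  thus ?thesis by (simp add: cosh_square_eq algebra_simps)
qed

lemma E_double: "w \<noteq> 0 \<Longrightarrow> E (2 * w) = exp w * sinh w / w"
proof -
  assume w: "w \<noteq> 0"
  have e2: "exp (2*w) = exp w * exp w" by (metis exp_add mult_2)
  have h: "exp (2*w) - 1 = 2 * (exp w * sinh w)"
    unfolding e2 by (simp add: sinh_field_def field_simps exp_minus)
  have "E (2*w) = (exp (2*w) - 1) / (2*w)" using w by (simp add: E_def)
  also have "\<dots> = exp w * sinh w / w" unfolding h by simp
  finally show ?thesis .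
qed

lemma E_logconv_generic:
  assumes "x \<noteq> 0" "y \<noteq> 0" "x + y \<noteq> 0" "x \<noteq> y"
  shows "(E ((x + y) / 2))\<^sup>2 \<le> E x * E y"
proof -
  define u where "u = (x + y) / 4"
  define v where "v = (x - y) / 4"
  have x: "x = 2 * (u + v)" and y: "y = 2 * (u - v)" and m: "(x + y) / 2 = 2 * u"
    by (simp_all add: u_def v_def field_simps)
  have u0: "u \<noteq> 0" and uv1: "u + v \<noteq> 0" and uv2: "u - v \<noteq> 0"
    using assms by (auto simp: u_def v_def field_simps)
  have Ex: "E x = exp (u + v) * sinh (u + v) / (u + v)" using E_double[OF uv1] x by simp
  have Ey: "E y = exp (u - v) * sinh (u - v) / (u - v)" using E_double[OF uv2] y by simp
  have Em: "E ((x + y) / 2) = exp u * sinh u / u" using E_double[OF u0] m by simp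
  have prod: "E x * E y = exp (2 * u) * (((sinh u)\<^sup>2 - (sinh v)\<^sup>2) / (u\<^sup>2 - v\<^sup>2))"
  proof -
    have "E x * E y = (exp (u + v) * exp (u - v)) * (sinh (u + v) * sinh (u - v)) / ((u + v) * (u - v))"
      by (simp add: Ex Ey)
    also have "exp (u + v) * exp (u - v) = exp (2 * u)" by (simp only: exp_add[symmetric]) simp
    also have "(u + v) * (u - v) = u\<^sup>2 - v\<^sup>2" by (simp add: power2_eq_square algebra_simps)
    finally show ?thesis by (simp add: sinh_prod)
  qed
  have sq: "(E ((x + y) / 2))\<^sup>2 = exp (2 * u) * ((sinh u)\<^sup>2 / u\<^sup>2)"
    by (simp add: Em power_divide power_mult_distrib exp_double[symmetric])
  have key: "(sinh u)\<^sup>2 / u\<^sup>2 \<le> ((sinh u)\<^sup>2 - (sinh v)\<^sup>2) / (u\<^sup>2 - v\<^sup>2)"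
  proof -
    have U: "u\<^sup>2 > 0" using u0 by simp
    have ne: "u\<^sup>2 \<noteq> v\<^sup>2" using uv1 uv2
      by (auto simp: power2_eq_iff)
    show ?thesis
    proof (cases "v\<^sup>2 < u\<^sup>2")
      case True
      hence "\<bar>v\<bar> < \<bar>u\<bar>" using power2_less_imp_less[of "\<bar>v\<bar>" "\<bar>u\<bar>"] by simp
      hence "(sinh v)\<^sup>2 * u\<^sup>2 \<le> (sinh u)\<^sup>2 * v\<^sup>2" by (rule sinh_sq_mono)
      with True U show ?thesis by (simp add: divide_simps algebra_simps)
    next
      case False
      hence F: "u\<^sup>2 < v\<^sup>2" using ne by simp
      hence "\<bar>u\<bar> < \<bar>v\<bar>" using power2_less_imp_less[of "\<bar>u\<bar>" "\<bar>v\<bar>"] by simp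
      hence "(sinh u)\<^sup>2 * v\<^sup>2 \<le> (sinh v)\<^sup>2 * u\<^sup>2" by (rule sinh_sq_mono)
      with F U show ?thesis by (simp add: divide_simps algebra_simps)
    qed
  qed
  show ?thesis unfolding prod sq by (rule mult_left_mono[OF key]) simp
qed

lemma E_logconv1:
  assumes "y \<noteq> 0"
  shows "(E ((x + y) / 2))\<^sup>2 \<le> E x * E y"
proof -
  have gen: "0 \<le> E t * E y - (E ((t + y) / 2))\<^sup>2" if "t \<noteq> 0" "t \<noteq> -y" for t
  proof (cases "t = y")
    case True thus ?thesis by (simp add: power2_eq_square)
  next
    case False
    thus ?thesis using E_logconv_generic[of t y] that assms by (simp add: add_eq_0_iff)
  qed
  have c: "isCont (\<lambda>t. E t * E y - (E ((t + y) / 2))\<^sup>2) x"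
    by (intro continuous_intros) auto
  have ev: "eventually (\<lambda>t. 0 \<le> E t * E y - (E ((t + y) / 2))\<^sup>2) (at x)"
    using eventually_neq_at_within[of 0 x UNIV] eventually_neq_at_within[of "-y" x UNIV]
    by eventually_elim (rule gen)
  have "0 \<le> E x * E y - (E ((x + y) / 2))\<^sup>2"
    using tendsto_lowerbound[OF c[unfolded isCont_def] ev] by simp
  thus ?thesis by simp
qed

lemma E_logconv: "(E ((x + y) / 2))\<^sup>2 \<le> E x * E y"
proof -
  have c: "isCont (\<lambda>t. E x * E t - (E ((x + t) / 2))\<^sup>2) y"
    by (intro continuous_intros) auto
  have ev: "eventually (\<lambda>t. 0 \<le> E x * E t - (E ((x + t) / 2))\<^sup>2) (at y)"
    using eventually_neq_at_within[of 0 y UNIV]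
    by eventually_elim (use E_logconv1 in simp)
  have "0 \<le> E x * E y - (E ((x + y) / 2))\<^sup>2"
    using tendsto_lowerbound[OF c[unfolded isCont_def] ev] by simp
  thus ?thesis by simp
qed

lemma E_P6:
  assumes "b \<ge> 1" "s < 0"
  shows "E s \<le> b * E (b * s)"
proof -
  have bs: "b * s \<noteq> 0" "s \<noteq> 0" using assms by auto
  have "exp (b * s) \<le> exp s" using assms by (simp add: mult_le_cancel_right1)
  hence "(exp s - 1) / s \<le> (exp (b * s) - 1) / s" using assms
    by (simp add: divide_le_eq_1 divide_simps)
  thus ?thesis using bs assms by (simp add: E_def)
qed

lemma E_P7:
  assumes "x < 0"
  shows "1 \<le> E x * (1 - x)"
proof -
  have "1 - x \<le> exp (-x)" using exp_ge_add_one_self[of "-x"] by simp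
  hence "exp x * (1 - x) \<le> 1" by (simp add: exp_minus field_simps)
  hence "(exp x - 1) * (1 - x) \<le> x"
    using assms by (simp add: algebra_simps)
  hence "1 \<le> (exp x - 1) * (1 - x) / x" using assms by (simp add: divide_simps) 
  thus ?thesis using assms by (simp add: E_def)
qed

definition Q :: "real \<Rightarrow> real \<Rightarrow> real \<Rightarrow> real" where
  "Q p \<alpha> s = (E s)\<^sup>2 / (E ((p - 1) / p * s) * E (\<alpha> / p * s))"

lemma Q_pos: "Q p \<alpha> s > 0"
  unfolding Q_def by (intro divide_pos_pos mult_pos_pos E_pos zero_less_power)

lemma Phi_repr:
  assumes "p > 0" "\<alpha> > 0" "z > -1"
  shows "Phi p \<alpha> z = ereal (\<alpha>\<^sup>2 / p\<^sup>2 * (ln (z + 1))\<^sup>2 * E ((p - 1) / p * ln (z + 1)) * E (\<alpha> / p * ln (z + 1)))"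
proof -
  define s where "s = ln (z + 1)"
  have zs: "z + 1 = exp s" using assms by (simp add: s_def)
  have pw: "(z + 1) powr r = exp (r * s)" for r using assms by (simp add: powr_def s_def)
  have nz: "\<not> z \<le> -1" using assms by simp
  show ?thesis
  proof (cases "p = 1")
    case True
    have "exp (\<alpha> * s) - 1 = (\<alpha> * s) * E (\<alpha> * s)" by (simp add: E_mul)
    hence "\<alpha> * s * (exp (\<alpha> * s) - 1) = \<alpha>\<^sup>2 * s\<^sup>2 * E (\<alpha> * s)"
      by (simp add: power2_eq_square)
    thus ?thesis using True nz unfolding Phi_def s_def[symmetric]
      by (simp add: pw E_def[of 0] zs[symmetric])
  next
    case False
    have p1: "p - 1 \<noteq> 0" using False by simp
    have ea: "exp ((p - 1) / p * s) - 1 = ((p - 1) / p * s) * E ((p - 1) / p * s)" by (simp add: E_mul)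
    have eb: "exp (\<alpha> / p * s) - 1 = (\<alpha> / p * s) * E (\<alpha> / p * s)" by (simp add: E_mul)
    have "\<alpha> / (p - 1) * ((z + 1) powr ((p - 1) / p) - 1) * ((z + 1) powr (\<alpha> / p) - 1)
        = \<alpha> / (p - 1) * (((p - 1) / p * s) * E ((p - 1) / p * s)) * ((\<alpha> / p * s) * E (\<alpha> / p * s))"
      unfolding pw ea eb by (rule refl)
    also have "\<dots> = \<alpha>\<^sup>2 / p\<^sup>2 * s\<^sup>2 * E ((p - 1) / p * s) * E (\<alpha> / p * s)"
      using p1 assms by (simp add: field_simps power2_eq_square)
    finally show ?thesis using False nz unfolding Phi_def s_def[symmetric] by simp
  qed
qed

lemma ratio_repr:
  assumes "p > 0" "\<alpha> > 0" "z > -1" "z \<noteq> 0"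
  shows "\<exists>P>0. Phi p \<alpha> z = ereal P \<and> \<alpha>\<^sup>2 / (4 * p\<^sup>2) * z\<^sup>2 / P = Q p \<alpha> (ln (z + 1)) / 4"
proof -
  define s where "s = ln (z + 1)"
  have zs: "z = s * E s" using assms by (simp add: s_def E_mul)
  have s0: "s \<noteq> 0" using assms zs by auto
  define P where "P = \<alpha>\<^sup>2 / p\<^sup>2 * s\<^sup>2 * E ((p - 1) / p * s) * E (\<alpha> / p * s)"
  have Pp: "P > 0" using assms s0 E_pos unfolding P_def by (intro mult_pos_pos) auto
  have "\<alpha>\<^sup>2 / (4 * p\<^sup>2) * z\<^sup>2 / P = Q p \<alpha> s / 4"
    unfolding zs P_def Q_def using assms s0 E_pos[of "(p - 1) / p * s"] E_pos[of "\<alpha> / p * s"]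
    by (simp add: field_simps power2_eq_square)
  thus ?thesis using Pp Phi_repr[OF assms(1-3)] unfolding s_def P_def by auto
qed



lemma E_nz [simp]: "E x \<noteq> 0"
  using E_pos[of x] by linarith

lemma Mhat_upper:
  assumes "p > 0" "\<alpha> > 0" "\<And>s. s \<noteq> 0 \<Longrightarrow> Q p \<alpha> s \<le> K" "0 \<le> K"
  shows "Mhat p \<alpha> \<le> ereal (K / 4)"
  unfolding Mhat_def
proof (rule SUP_least)
  fix z :: real assume z: "z \<in> UNIV - {0}"
  show "ereal (\<alpha>\<^sup>2 / (4 * p\<^sup>2) * z\<^sup>2) / Phi p \<alpha> z \<le> ereal (K / 4)"
  proof (cases "z \<le> -1")
    case True
    thus ?thesis using assms by (simp add: Phi_def)
  next
    case False
    then obtain P where P: "P > 0" "Phi p \<alpha> z = ereal P"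
      "\<alpha>\<^sup>2 / (4 * p\<^sup>2) * z\<^sup>2 / P = Q p \<alpha> (ln (z + 1)) / 4"
      using ratio_repr[OF assms(1,2), of z] z by auto
    have "ln (z + 1) \<noteq> 0" using False z by auto
    hence "Q p \<alpha> (ln (z + 1)) / 4 \<le> K / 4" using assms(3) by simp
    thus ?thesis using P by simp
  qed
qed

lemma Mhat_lower:
  assumes "p > 0" "\<alpha> > 0" "s \<noteq> 0"
  shows "ereal (Q p \<alpha> s / 4) \<le> Mhat p \<alpha>"
proof -
  define z where "z = exp s - 1"
  have z: "z > -1" "z \<noteq> 0" "ln (z + 1) = s" using assms by (auto simp: z_def)
  obtain P where P: "P > 0" "Phi p \<alpha> z = ereal P"
      "\<alpha>\<^sup>2 / (4 * p\<^sup>2) * z\<^sup>2 / P = Q p \<alpha> (ln (z + 1)) / 4"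
    using ratio_repr[OF assms(1,2) z(1,2)] by auto
  have "ereal (Q p \<alpha> s / 4) = ereal (\<alpha>\<^sup>2 / (4 * p\<^sup>2) * z\<^sup>2) / Phi p \<alpha> z"
    using P z by simp
  also have "\<dots> \<le> Mhat p \<alpha>" unfolding Mhat_def using z by (intro SUP_upper) auto
  finally show ?thesis .
qed

lemma Mhat_ge_quarter:
  assumes "p > 0" "\<alpha> > 0"
  shows "ereal (1 / 4) \<le> Mhat p \<alpha>"
proof -
  have c: "isCont (Q p \<alpha>) 0" unfolding Q_def
    by (intro continuous_intros) auto
  have "Q p \<alpha> 0 = 1" by (simp add: Q_def E_def)
  hence "((\<lambda>s. ereal (Q p \<alpha> s / 4)) \<longlongrightarrow> ereal (1 / 4)) (at 0)"
    using c unfolding isCont_def by (intro tendsto_intros) auto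
  moreover have "eventually (\<lambda>s. ereal (Q p \<alpha> s / 4) \<le> Mhat p \<alpha>) (at 0)"
    using eventually_neq_at_within[of 0 0 UNIV] by eventually_elim (rule Mhat_lower[OF assms])
  ultimately show ?thesis by (intro tendsto_upperbound) auto
qed

lemma frac_aux: fixes e x y :: real assumes "e > 0" "y > 0"
  shows "e\<^sup>2 * x / (e * y / 2) = 2 * e * x / y"
  using assms by (simp add: field_simps power2_eq_square)

lemma E_twice: "E (2 * s) = E s * (exp s + 1) / 2"
proof (cases "s = 0")
  case False
  have "exp (2 * s) = exp s * exp s" by (metis exp_add mult_2)
  thus ?thesis using False by (simp add: E_def field_simps)
qed (simp add: E_def)

lemma Q_bounded:
  assumes "\<alpha> > 0" "p > 0" "p \<le> max (\<alpha> / 2) (\<alpha> - 1)" "s \<noteq> 0"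
  shows "Q p \<alpha> s \<le> \<alpha> / p + 2 * (1 - (p - 1) / p) + 1"
proof -
  define a where "a = (p - 1) / p"
  define b where "b = \<alpha> / p"
  have Q: "Q p \<alpha> s = (E s)\<^sup>2 / (E (a * s) * E (b * s))" by (simp add: Q_def a_def b_def)
  have a1: "a < 1" using assms by (simp add: a_def)
  have Ea: "E (a * s) > 0" and Eb: "E (b * s) > 0" and Es: "E s > 0" by (simp_all add: E_pos)
  have b0: "b > 0" using assms by (simp add: b_def)
  have K1: "1 \<le> b + 2 * (1 - a) + 1" "b \<le> b + 2 * (1 - a) + 1" "2 * (1 - a) \<le> b + 2 * (1 - a) + 1"
    using a1 b0 by auto
  have "Q p \<alpha> s \<le> b + 2 * (1 - a) + 1"
  proof (cases "p \<ge> 1")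
    case True
    have a0: "a \<ge> 0" using True by (simp add: a_def)
    have "\<alpha> \<ge> p + 1" using assms True by (auto simp: max_def split: if_splits)
    hence "(p + 1) / p \<le> \<alpha> / p" using assms by (simp add: divide_right_mono)
    moreover have "2 - a = (p + 1) / p" using assms by (simp add: a_def field_simps)
    ultimately have b2: "b \<ge> 2 - a" by (simp add: b_def)
    show ?thesis
    proof (cases "s > 0")
      case True
      have "(E s)\<^sup>2 \<le> E (a * s) * E ((2 - a) * s)"
        using E_logconv[of "a * s" "(2 - a) * s"] by (simp add: algebra_simps)
      also have "\<dots> \<le> E (a * s) * E (b * s)"
        using b2 True Ea by (intro mult_left_mono E_mono) auto
      finally have "Q p \<alpha> s \<le> 1" unfolding Q using Ea Eb by simp
      thus ?thesis using K1 by linarith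
    next
      case False
      hence s: "s < 0" using assms by simp
      have "E s \<le> E (a * s)" using a0 a1 s by (intro E_mono) (simp add: mult_le_cancel_right1)
      hence "Q p \<alpha> s \<le> (E s)\<^sup>2 / (E s * E (b * s))" unfolding Q using Es Eb Ea
        by (intro divide_left_mono mult_right_mono mult_pos_pos) auto
      also have "\<dots> = E s / E (b * s)" using Es by (simp add: power2_eq_square)
      also have "\<dots> \<le> b" using E_P6[of b s] b2 a1 s Eb by (simp add: divide_le_eq)
      finally show ?thesis using K1 by linarith
    qed
  next
    case False
    have a0: "a < 0" using False assms by (simp add: a_def divide_neg_pos)
    have "\<alpha> \<ge> 2 * p" using assms False by (auto simp: max_def split: if_splits)
    hence b2: "b \<ge> 2" using assms by (simp add: b_def field_simps)
    show ?thesis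
    proof (cases "s > 0")
      case False
      hence s: "s < 0" using assms by simp
      have "E (a * s) \<ge> 1" using a0 s by (intro E_ge1) (simp add: mult_nonneg_nonneg mult_nonpos_nonpos)
      have "E s \<le> 1" using s by (intro E_le1) simp
      have "Q p \<alpha> s \<le> (E s)\<^sup>2 / E (b * s)" unfolding Q using Es Eb \<open>E (a * s) \<ge> 1\<close>
        by (simp add: divide_simps mult_left_mono)
      also have "\<dots> \<le> E s / E (b * s)" using Es Eb \<open>E s \<le> 1\<close>
        by (simp add: divide_right_mono power2_eq_square mult_left_le)
      also have "\<dots> \<le> b" using E_P6[of b s] b2 s Eb by (simp add: divide_le_eq)
      finally show ?thesis using K1 by linarith
    next
      case True
      have as: "a * s < 0" using a0 True by (simp add: mult_neg_pos)
      have Pa: "1 \<le> E (a * s) * (1 - a * s)" by (rule E_P7[OF as])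
      have E2: "E (2 * s) = E s * (exp s + 1) / 2" by (rule E_twice)
      have Ebs: "E (2 * s) \<le> E (b * s)" using b2 True by (intro E_mono) simp
      have "Q p \<alpha> s \<le> (E s)\<^sup>2 * (1 - a * s) / E (2 * s)"
      proof -
        have "(E s)\<^sup>2 / (E (a * s) * E (b * s)) \<le> (E s)\<^sup>2 * (1 - a * s) / (E (a * s) * (1 - a * s) * E (b * s))"
          using as Ea Eb by (simp add: field_simps)
        also have "\<dots> \<le> (E s)\<^sup>2 * (1 - a * s) / (1 * E (2 * s))"
          using Pa Ebs as E_pos[of "2 * s"] Es Ea
          by (intro divide_left_mono mult_mono mult_pos_pos) auto
        finally show ?thesis unfolding Q by simp
      qed
      also have "\<dots> = 2 * E s * (1 - a * s) / (exp s + 1)"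
        unfolding E2 by (rule frac_aux) (use Es in \<open>auto simp: add_pos_pos\<close>)
      also have "\<dots> \<le> 2 * (1 - a)"
      proof (cases "s \<le> 1")
        case True
        have "E s \<le> E 1" using True by (rule E_mono)
        also have "E 1 = exp 1 - 1" by (simp add: E_def)
        finally have e2: "E s \<le> 2" using exp_le by simp
        have la: "1 - a * s \<le> 1 - a" using a0 True \<open>s > 0\<close>
          by (simp add: mult_le_cancel_left1 mult_left_mono_neg)
        have es: "2 \<le> exp s + 1" using \<open>s > 0\<close> by simp
        have m1: "E s * (1 - a * s) \<le> 2 * (1 - a)"
          by (rule mult_mono[OF e2 la]) (use as in simp_all)
        have m2: "2 * (1 - a) * 2 \<le> 2 * (1 - a) * (exp s + 1)"
          by (rule mult_left_mono[OF es]) (use a1 in simp)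
        have "2 * E s * (1 - a * s) \<le> 2 * (1 - a) * (exp s + 1)"
          using m1 m2 by (simp add: algebra_simps)
        thus ?thesis by (simp add: divide_le_eq add_pos_pos)
      next
        case False
        have "E s * (1 - a * s) = (exp s - 1) * (1 / s - a)"
          using \<open>s > 0\<close> by (simp add: E_def field_simps)
        also have "\<dots> \<le> (exp s - 1) * (1 - a)"
          using False \<open>s > 0\<close> by (intro mult_left_mono) auto
        finally have X: "E s * (1 - a * s) \<le> (exp s - 1) * (1 - a)" .
        have "2 * E s * (1 - a * s) \<le> 2 * (1 - a) * (exp s - 1)" using X by (simp add: algebra_simps)
        also have "\<dots> \<le> 2 * (1 - a) * (exp s + 1)" using a1 by simp
        finally show ?thesis by (simp add: divide_le_eq add_pos_pos)
      qed
      finally show ?thesis using K1 by linarith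
    qed
  qed
  thus ?thesis by (simp add: a_def b_def)
qed



lemma frac_aux2: fixes e x :: real assumes "e > 0" "x > 0"
  shows "e\<^sup>2 / (inverse x * e * (e * (x + 1) / 2)) = 2 * x / (x + 1)"
proof -
  have "inverse x * e * (e * (x + 1) / 2) = e\<^sup>2 * ((x + 1) / (2 * x))"
    using assms by (simp add: field_simps power2_eq_square)
  thus ?thesis using assms by (simp add: add_pos_pos)
qed

lemma Q_half_bound:
  assumes "\<alpha> \<ge> 1" "s \<noteq> 0"
  shows "Q (1/2) \<alpha> s \<le> 2 * \<alpha>"
proof -
  have q: "Q (1/2) \<alpha> s = (E s)\<^sup>2 / (E (- s) * E (2 * \<alpha> * s))" by (simp add: Q_def ac_simps)
  have e2: "exp (2 * s) = exp s * exp s" by (metis exp_add mult_2)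
  have as: "2 * \<alpha> * s \<noteq> 0" using assms by simp
  have l: "exp s * E s = (exp (2 * s) - exp s) / s" unfolding e2 using assms by (simp add: E_def field_simps)
  have r: "2 * \<alpha> * E (2 * \<alpha> * s) = (exp (2 * \<alpha> * s) - 1) / s" using assms as by (simp add: E_def field_simps)
  have key: "exp s * E s \<le> 2 * \<alpha> * E (2 * \<alpha> * s)"
  proof (cases "s > 0")
    case True
    have "exp (2 * s) \<le> exp (2 * \<alpha> * s)" using assms True by simp
    moreover have "1 \<le> exp s" using True by simp
    ultimately have "exp (2 * s) - exp s \<le> exp (2 * \<alpha> * s) - 1" by linarith
    thus ?thesis unfolding l r using True by (simp add: divide_right_mono)
  next
    case False
    hence s: "s < 0" using assms by simp
    have "exp (2 * \<alpha> * s) \<le> exp (2 * s)" using assms s by simp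
    moreover have "exp s \<le> 1" using s by simp
    ultimately have "exp (2 * \<alpha> * s) - 1 \<le> exp (2 * s) - exp s" by linarith
    thus ?thesis unfolding l r using s by (simp add: divide_right_mono_neg)
  qed
  have "Q (1/2) \<alpha> s = exp s * E s / E (2 * \<alpha> * s)"
    unfolding q E_neg by (simp add: exp_minus field_simps power2_eq_square)
  also have "\<dots> \<le> 2 * \<alpha>" using key E_pos[of "2 * \<alpha> * s"] by (simp add: divide_le_eq)
  finally show ?thesis .
qed

lemma Q_half_one:
  assumes "s \<noteq> 0"
  shows "Q (1/2) 1 s = 2 * exp s / (exp s + 1)"
proof -
  have q: "Q (1/2) 1 s = (E s)\<^sup>2 / (E (- s) * E (2 * s))" by (simp add: Q_def)
  have e2: "exp (2 * s) = exp s * exp s" by (metis exp_add mult_2)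
  have p: "exp s + 1 > 0" by (simp add: add_pos_pos)
  have "Q (1/2) 1 s = (E s)\<^sup>2 / (inverse (exp s) * E s * (E s * (exp s + 1) / 2))"
    unfolding q E_neg E_twice exp_minus by simp
  also have "\<dots> = 2 * exp s / (exp s + 1)" by (rule frac_aux2) (simp_all add: E_pos)
  finally show ?thesis .
qed

lemma Q_special:
  assumes "p > 0" "\<alpha> = p + 1"
  shows "Q p \<alpha> s \<le> 1"
proof -
  have "(E s)\<^sup>2 \<le> E ((p - 1) / p * s) * E (\<alpha> / p * s)"
  proof -
    have "((p - 1) / p * s + \<alpha> / p * s) / 2 = s" using assms by (simp add: field_simps)
    thus ?thesis using E_logconv[of "(p - 1) / p * s" "\<alpha> / p * s"] by simp
  qed
  thus ?thesis unfolding Q_def using E_pos by (simp add: divide_le_eq_1 mult_pos_pos)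
qed

lemma ereal_quarter: "(1 / 4 :: ereal) = ereal (1 / 4)" and ereal_half: "(1 / 2 :: ereal) = ereal (1 / 2)"
  by (metis ereal_divide one_ereal_def numeral_eq_ereal zero_neq_numeral)+



lemma quad_aux:
  fixes P M p \<alpha> z \<xi> :: real
  assumes "P > 0" "M > 0" "p > 0" "\<alpha> > 0" "\<alpha>\<^sup>2 / (4 * p\<^sup>2) * z\<^sup>2 / P \<le> M"
  shows "\<xi> * z - P \<le> M * (p / \<alpha> * \<xi>)\<^sup>2"
proof -
  define m where "m = M * p\<^sup>2"
  have m0: "m > 0" using assms by (simp add: m_def)
  have h: "\<alpha>\<^sup>2 * z\<^sup>2 \<le> 4 * m * P"
  proof -
    have a: "\<alpha>\<^sup>2 / (4 * p\<^sup>2) * z\<^sup>2 \<le> M * P" using assms(5) pos_divide_le_eq[OF assms(1)] by blast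
    have e: "\<alpha>\<^sup>2 * z\<^sup>2 = (\<alpha>\<^sup>2 / (4 * p\<^sup>2) * z\<^sup>2) * (4 * p\<^sup>2)" using assms by simp
    also have "\<dots> \<le> (M * P) * (4 * p\<^sup>2)" by (rule mult_right_mono[OF a]) simp
    also have "\<dots> = 4 * m * P" by (simp add: m_def)
    finally show ?thesis .
  qed
  have sq: "0 \<le> (2 * m * \<xi> - \<alpha>\<^sup>2 * z)\<^sup>2" by simp
  have "4 * m * (\<alpha>\<^sup>2 * \<xi> * z - \<alpha>\<^sup>2 * P) \<le> 4 * m * (m * \<xi>\<^sup>2)"
  proof -
    have "\<alpha>\<^sup>2 * (\<alpha>\<^sup>2 * z\<^sup>2) \<le> \<alpha>\<^sup>2 * (4 * m * P)" by (rule mult_left_mono[OF h]) simp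
    thus ?thesis using sq by (simp add: power2_eq_square algebra_simps)
  qed
  hence s1: "\<alpha>\<^sup>2 * \<xi> * z - \<alpha>\<^sup>2 * P \<le> m * \<xi>\<^sup>2"
    by (rule mult_left_le_imp_le) (use m0 in simp)
  have e: "\<alpha>\<^sup>2 * (M * (p / \<alpha> * \<xi>)\<^sup>2) = m * \<xi>\<^sup>2"
    using assms by (simp add: m_def power_divide power_mult_distrib field_simps)
  have "\<alpha>\<^sup>2 * (\<xi> * z - P) \<le> \<alpha>\<^sup>2 * (M * (p / \<alpha> * \<xi>)\<^sup>2)"
    unfolding e using s1 by (simp add: algebra_simps)
  thus ?thesis by (rule mult_left_le_imp_le) (use assms in simp)
qed

lemma Phi_zero: "p > 0 \<Longrightarrow> \<alpha> > 0 \<Longrightarrow> Phi p \<alpha> 0 = ereal 0"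
  using Phi_repr[of p \<alpha> 0] by simp

theorem mainTheorem12:
  fixes p \<alpha> :: real
  assumes "\<alpha> > 0" and "p > 0" and "p \<le> max (\<alpha> / 2) (\<alpha> - 1)"
  shows "Mhat p \<alpha> < \<infinity>
    \<and> (\<forall>\<xi>::real. PhiStar p \<alpha> \<xi> \<le> Mhat p \<alpha> * ereal ((p / \<alpha> * \<xi>)\<^sup>2))
    \<and> (Mhat p \<alpha> \<ge> 1 / 4)
    \<and> (p = 1 / 2 \<and> \<alpha> \<ge> 1 \<longrightarrow> Mhat p \<alpha> \<le> ereal (\<alpha> / 2))
    \<and> (p = 1 / 2 \<and> \<alpha> = 1 \<longrightarrow> Mhat p \<alpha> = 1 / 2)
    \<and> (\<alpha> = p + 1 \<longrightarrow> Mhat p \<alpha> = 1 / 4)"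
proof -
  define K where "K = \<alpha> / p + 2 * (1 - (p - 1) / p) + 1"
  have qb: "\<And>s. s \<noteq> 0 \<Longrightarrow> Q p \<alpha> s \<le> K" unfolding K_def using Q_bounded assms by blast
  have K0: "0 \<le> K" using qb[of 1] Q_pos[of p \<alpha> 1] by simp
  have up: "Mhat p \<alpha> \<le> ereal (K / 4)" by (rule Mhat_upper[OF assms(2,1) qb K0])
  have lo: "ereal (1 / 4) \<le> Mhat p \<alpha>" by (rule Mhat_ge_quarter[OF assms(2,1)])
  obtain M where M: "Mhat p \<alpha> = ereal M" using up lo by (cases "Mhat p \<alpha>") auto
  have M4: "M \<ge> 1 / 4" using lo M by simp
  have P1: "Mhat p \<alpha> < \<infinity>" using M by simp
  have P2: "\<forall>\<xi>::real. PhiStar p \<alpha> \<xi> \<le> Mhat p \<alpha> * ereal ((p / \<alpha> * \<xi>)\<^sup>2)"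
  proof
    fix \<xi> :: real
    show "PhiStar p \<alpha> \<xi> \<le> Mhat p \<alpha> * ereal ((p / \<alpha> * \<xi>)\<^sup>2)"
      unfolding PhiStar_def M times_ereal.simps(1)
    proof (rule SUP_least)
      fix z :: real
      show "ereal (\<xi> * z) - Phi p \<alpha> z \<le> ereal (M * (p / \<alpha> * \<xi>)\<^sup>2)"
      proof (cases "z \<le> -1")
        case True thus ?thesis by (simp add: Phi_def)
      next
        case False
        show ?thesis
        proof (cases "z = 0")
          case True thus ?thesis using Phi_zero[OF assms(2,1)] M4 by simp
        next
          case z0: False
          obtain P where P: "P > 0" "Phi p \<alpha> z = ereal P"
            "\<alpha>\<^sup>2 / (4 * p\<^sup>2) * z\<^sup>2 / P = Q p \<alpha> (ln (z + 1)) / 4"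
            using ratio_repr[OF assms(2,1), of z] False z0 by auto
          have "ln (z + 1) \<noteq> 0" using False z0 by auto
          hence "ereal (Q p \<alpha> (ln (z + 1)) / 4) \<le> ereal M" using Mhat_lower[OF assms(2,1)] M by metis
          hence "Q p \<alpha> (ln (z + 1)) / 4 \<le> M" by simp
          hence "\<alpha>\<^sup>2 / (4 * p\<^sup>2) * z\<^sup>2 / P \<le> M" by (simp only: P(3))
          hence "\<xi> * z - P \<le> M * (p / \<alpha> * \<xi>)\<^sup>2"
            using quad_aux[OF P(1) _ assms(2,1)] M4 by simp
          thus ?thesis using P by simp
        qed
      qed
    qed
  qed
  have P3: "Mhat p \<alpha> \<ge> 1 / 4" unfolding ereal_quarter by (rule lo)
  have P4: "p = 1 / 2 \<and> \<alpha> \<ge> 1 \<longrightarrow> Mhat p \<alpha> \<le> ereal (\<alpha> / 2)"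
  proof
    assume h: "p = 1 / 2 \<and> \<alpha> \<ge> 1"
    have p: "p = 1 / 2" using h by simp
    have "Mhat (1/2) \<alpha> \<le> ereal (2 * \<alpha> / 4)"
      by (rule Mhat_upper) (use h Q_half_bound assms in auto)
    hence "Mhat (1/2) \<alpha> \<le> ereal (\<alpha> / 2)" by simp
    thus "Mhat p \<alpha> \<le> ereal (\<alpha> / 2)" unfolding p .
  qed
  have P5: "p = 1 / 2 \<and> \<alpha> = 1 \<longrightarrow> Mhat p \<alpha> = 1 / 2"
  proof
    assume h: "p = 1 / 2 \<and> \<alpha> = 1"
    have p: "p = 1 / 2" and a1: "\<alpha> = 1" using h by simp_all
    have MM: "Mhat p \<alpha> = Mhat (1/2) 1" by (simp only: p a1)
    have u0: "Mhat p \<alpha> \<le> ereal (\<alpha> / 2)" by (rule P4[rule_format]) (use h in simp)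
    have u: "Mhat p \<alpha> \<le> ereal (1 / 2)" using u0 unfolding a1 by simp
    have lim: "((\<lambda>s. ereal (exp s / (2 * (exp s + 1)))) \<longlongrightarrow> ereal (1 / 2)) at_top"
    proof -
      have "((\<lambda>s::real. exp s / (2 * (exp s + 1))) \<longlongrightarrow> 1 / 2) at_top" by real_asymp
      thus ?thesis by (rule tendsto_ereal)
    qed
    have ev: "eventually (\<lambda>s. ereal (exp s / (2 * (exp s + 1))) \<le> Mhat p \<alpha>) at_top"
    proof -
      have "eventually (\<lambda>s::real. s > 0) at_top" by (rule eventually_gt_at_top)
      thus ?thesis
      proof eventually_elim
        case (elim s)
        have "ereal (Q (1/2) 1 s / 4) \<le> Mhat (1/2) 1" using elim by (intro Mhat_lower) auto
        moreover have "Q (1/2) 1 s / 4 = exp s / (2 * (exp s + 1))" proof -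
          have "0 < exp s" by simp
          hence n: "exp s * 4 + 4 \<noteq> 0" "2 * exp s + 2 \<noteq> 0" by linarith+
          show ?thesis using elim n by (simp add: Q_half_one field_simps)
        qed
        ultimately show ?case unfolding MM by simp
      qed
    qed
    have "ereal (1 / 2) \<le> Mhat p \<alpha>" by (rule tendsto_upperbound[OF lim ev]) simp
    hence "Mhat p \<alpha> = ereal (1 / 2)" using u by (intro antisym)
    thus "Mhat p \<alpha> = 1 / 2" unfolding ereal_half .
  qed
  have P6: "\<alpha> = p + 1 \<longrightarrow> Mhat p \<alpha> = 1 / 4"
  proof
    assume h: "\<alpha> = p + 1"
    have "Mhat p \<alpha> \<le> ereal (1 / 4)"
      using Mhat_upper[OF assms(2,1), of 1] Q_special[OF assms(2) h] by auto
    hence "Mhat p \<alpha> = ereal (1 / 4)" using lo by (intro antisym)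
    thus "Mhat p \<alpha> = 1 / 4" unfolding ereal_quarter .
  qed
  show ?thesis using P1 P2 P3 P4 P5 P6 by blast
qed

end
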